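(* Under the standing assumptions, the following are equivalent: (i) there exists $\mathbf c\in\mathbb R^n$ with all $c_j>0$, $c_1=1$ and $\mathbf c^T(I-M_0)>\mathbf 0^T$ (componentwise strict), i.e. the value-feasible domain $\Theta^{val}$ has nonempty interior; (ii) $\lambda_{\max}(M_0)<1$; (iii) $\lambda_{\max}(\tilde A+BL)<1$. Moreover, with non-strict inequalities: $\Theta^{val}\neq\emptyset$ $\iff$ $\lambda_{\max}(M_0)\le 1$ $\iff$ $\lambda_{\max}(\tilde A+BL)\le 1$.
   Context: Fix $n\ge 2$. $A$ and $K$ are $n\times n$ entrywise nonnegative real matrices; $\delta_1,\dots,\delta_n\in(0,1]$, $D=K\,\mathrm{diag}(\delta_1,\dots,\delta_n)$, and $\tilde A=A+D$. $L=\mathrm{diag}(l_1,\dots,l_n)$ with all $l_j>0$. $B$ is an $n\times n$ entrywise nonnegative matrix with no zero column. Standing assumption: $\tilde A$ is irreducible and $\lambda_{\max}(\tilde A)<1$, where $\lambda_{\max}(X)$ denotes the spectral radius of a square matrix $X$. $M_0:=L(I-\tilde A)^{-1}B$. Vector inequalities are componentwise. The value-feasible domain is $\Theta^{val}:=\{\mathbf c\in\mathbb R^n:\ c_j>0\ \forall j,\ c_1=1,\ \mathbf c^T(I-M_0)\ge \mathbf 0^T\}$. *)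

theory Defs
  imports "Jordan_Normal_Form.Spectral_Radius" "Jordan_Normal_Form.Gauss_Jordan_Elimination"
begin

definition sr :: "real mat \<Rightarrow> real" where
  "sr X = spectral_radius (map_mat complex_of_real X)"

definition nonneg_mat :: "real mat \<Rightarrow> bool" where
  "nonneg_mat X \<longleftrightarrow> (\<forall>i<dim_row X. \<forall>j<dim_col X. X $$ (i,j) \<ge> 0)"

definition irreducible_mat :: "real mat \<Rightarrow> bool" where
  "irreducible_mat X \<longleftrightarrow>
     (\<forall>i<dim_row X. \<forall>j<dim_row X.
        (i,j) \<in> {(a,b). a < dim_row X \<and> b < dim_row X \<and> X $$ (a,b) \<noteq> 0}\<^sup>+)"

definition diag_of :: "nat \<Rightarrow> (nat \<Rightarrow> real) \<Rightarrow> real mat" where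
  "diag_of n d = mat n n (\<lambda>(i,j). if i = j then d i else 0)"

definition M0_of :: "nat \<Rightarrow> real mat \<Rightarrow> real mat \<Rightarrow> real mat \<Rightarrow> real mat" where
  "M0_of n L At B = L * the (mat_inverse (1\<^sub>m n - At)) * B"

(* value-feasible domain; c^T (I - M0) >= 0 written as (I - M0)^T c >= 0; c_1 is index 0 *)
definition Theta_val :: "nat \<Rightarrow> real mat \<Rightarrow> real vec set" where
  "Theta_val n M0 = {c. dim_vec c = n \<and> (\<forall>j<n. c $ j > 0) \<and> c $ 0 = 1 \<and>
      (\<forall>j<n. (transpose_mat (1\<^sub>m n - M0) *\<^sub>v c) $ j \<ge> 0)}"

end

theory Submission
  imports Defs
begin

abbreviation cm :: "real mat \<Rightarrow> complex mat" where "cm X \<equiv> map_mat complex_of_real X"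

lemma idx_mult:
  assumes "X \<in> carrier_mat n n" "Y \<in> carrier_mat n n" "i < n" "j < n"
  shows "(X * Y) $$ (i,j) = (\<Sum>k<n. X $$ (i,k) * Y $$ (k,j))"
  using assms by (auto simp: scalar_prod_def lessThan_atLeast0 intro!: sum.cong)

lemma idx_mult_vec:
  assumes "X \<in> carrier_mat n n" "dim_vec v = n" "i < n"
  shows "(X *\<^sub>v v) $ i = (\<Sum>k<n. X $$ (i,k) * v $ k)"
  using assms by (auto simp: scalar_prod_def lessThan_atLeast0 intro!: sum.cong)

lemma smult_pow_mat:
  fixes X :: "real mat"
  assumes "X \<in> carrier_mat n n"
  shows "(c \<cdot>\<^sub>m X) ^\<^sub>m k = (c ^ k) \<cdot>\<^sub>m (X ^\<^sub>m k)"
proof (induct k)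
  case 0 then show ?case using assms by (auto intro!: eq_matI)
next
  case (Suc k)
  have "(c \<cdot>\<^sub>m X) ^\<^sub>m Suc k = (c ^ k \<cdot>\<^sub>m X ^\<^sub>m k) * (c \<cdot>\<^sub>m X)" using Suc by simp
  also have "\<dots> = c ^ Suc k \<cdot>\<^sub>m (X ^\<^sub>m Suc k)"
  proof -
    have P: "X ^\<^sub>m k \<in> carrier_mat n n" using assms by simp
    have "(c ^ k \<cdot>\<^sub>m X ^\<^sub>m k) * (c \<cdot>\<^sub>m X) = c ^ k \<cdot>\<^sub>m (X ^\<^sub>m k * (c \<cdot>\<^sub>m X))"
      using mult_smult_assoc_mat[OF P, of "c \<cdot>\<^sub>m X" n] assms by simp
    also have "X ^\<^sub>m k * (c \<cdot>\<^sub>m X) = c \<cdot>\<^sub>m (X ^\<^sub>m k * X)"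
      by (rule mult_smult_distrib[OF P assms])
    also have "c ^ k \<cdot>\<^sub>m (c \<cdot>\<^sub>m (X ^\<^sub>m k * X)) = c ^ Suc k \<cdot>\<^sub>m (X ^\<^sub>m Suc k)"
      by (auto intro!: eq_matI simp: algebra_simps)
    finally show ?thesis .
  qed
  finally show ?case .
qed

lemma sr_eig:
  assumes X: "X \<in> carrier_mat n n" and n: "n > 0"
  shows "\<exists>lam v. eigenvector (cm X) v lam \<and> cmod lam = sr X"
proof -
  have cX: "cm X \<in> carrier_mat n n" using X by auto
  from spectral_radius_mem_max(1)[OF cX n] obtain lam where
    "lam \<in> spectrum (cm X)" "spectral_radius (cm X) = cmod lam" by auto
  then show ?thesis unfolding sr_def spectrum_def eigenvalue_def by auto
qed

lemma sr_ge_eig: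
  assumes X: "X \<in> carrier_mat n n" and ev: "eigenvector (cm X) v lam"
  shows "cmod lam \<le> sr X"
proof -
  have cX: "cm X \<in> carrier_mat n n" using X by auto
  have ev': "eigenvalue (cm X) lam" using ev unfolding eigenvalue_def by auto
  have n: "n > 0" using eigenvalue_imp_nonzero_dim[OF cX ev'] .
  show ?thesis unfolding sr_def
    by (rule spectral_radius_mem_max(2)[OF cX n], auto simp: spectrum_def ev')
qed

lemma sr_nonneg:
  assumes X: "X \<in> carrier_mat n n" and n: "n > 0"
  shows "sr X \<ge> 0"
  using sr_eig[OF X n] by (metis norm_ge_zero)

lemma sr_transpose:
  assumes X: "X \<in> carrier_mat n n"
  shows "sr (transpose_mat X) = sr X"
proof -
  have cX: "cm X \<in> carrier_mat n n" using X by auto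
  have cXT: "cm (transpose_mat X) \<in> carrier_mat n n" using X by auto
  have "cm (transpose_mat X) = transpose_mat (cm X)" by (simp add: map_mat_transpose)
  then have "spectrum (cm (transpose_mat X)) = spectrum (cm X)"
    using spectrum_root_char_poly[OF cXT] spectrum_root_char_poly[OF cX]
      char_poly_transpose_mat[OF cX] by simp
  then show ?thesis unfolding sr_def spectral_radius_def by simp
qed

lemma sr_scale_ge:
  assumes X: "X \<in> carrier_mat n n" and n: "n > 0" and t: "t > 0"
  shows "t * sr X \<le> sr (t \<cdot>\<^sub>m X)"
proof -
  obtain lam v where ev: "eigenvector (cm X) v lam" and nl: "cmod lam = sr X"
    using sr_eig[OF X n] by (metis norm_ge_zero)
  have v: "v \<in> carrier_vec n" "v \<noteq> 0\<^sub>v n" "cm X *\<^sub>v v = lam \<cdot>\<^sub>v v"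
    using ev X unfolding eigenvector_def by auto
  have "cm (t \<cdot>\<^sub>m X) *\<^sub>v v = (complex_of_real t * lam) \<cdot>\<^sub>v v"
  proof (rule eq_vecI)
    fix i assume i: "i < dim_vec ((complex_of_real t * lam) \<cdot>\<^sub>v v)"
    then have i': "i < n" using v by auto
    have "(cm X *\<^sub>v v) $ i = lam * v $ i" using v i' by simp
    then have "row (cm X) i \<bullet> v = lam * v $ i" using i' X by simp
    moreover have "row (cm (t \<cdot>\<^sub>m X)) i \<bullet> v = complex_of_real t * (row (cm X) i \<bullet> v)"
      using i' X v by (auto simp: scalar_prod_def sum_distrib_left intro!: sum.cong)
    ultimately show "(cm (t \<cdot>\<^sub>m X) *\<^sub>v v) $ i = ((complex_of_real t * lam) \<cdot>\<^sub>v v) $ i"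
      using i' X v by simp
  qed (use v X in auto)
  then have "eigenvector (cm (t \<cdot>\<^sub>m X)) v (complex_of_real t * lam)"
    using v X unfolding eigenvector_def by auto
  from sr_ge_eig[OF _ this, of n] X have "cmod (complex_of_real t * lam) \<le> sr (t \<cdot>\<^sub>m X)" by auto
  then show ?thesis using t nl by (simp add: norm_mult)
qed

lemma sr_scale:
  assumes X: "X \<in> carrier_mat n n" and n: "n > 0" and t: "t > 0"
  shows "sr (t \<cdot>\<^sub>m X) = t * sr X"
proof -
  have a: "t * sr X \<le> sr (t \<cdot>\<^sub>m X)" by (rule sr_scale_ge[OF X n t])
  have tX: "t \<cdot>\<^sub>m X \<in> carrier_mat n n" using X by auto
  have "(1/t) * sr (t \<cdot>\<^sub>m X) \<le> sr ((1/t) \<cdot>\<^sub>m (t \<cdot>\<^sub>m X))"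
    by (rule sr_scale_ge[OF tX n], use t in simp)
  moreover have "(1/t) \<cdot>\<^sub>m (t \<cdot>\<^sub>m X) = X" using t by (auto intro!: eq_matI)
  ultimately have "sr (t \<cdot>\<^sub>m X) \<le> t * sr X" using t by (simp add: field_simps)
  with a show ?thesis by simp
qed

lemma vec_nonzero_idx:
  assumes "v \<in> carrier_vec n" "v \<noteq> 0\<^sub>v n"
  shows "\<exists>i<n. v $ i \<noteq> 0"
proof (rule ccontr)
  assume "\<not> ?thesis"
  then have "v = 0\<^sub>v n" using assms by (auto intro!: eq_vecI)
  with assms show False by simp
qed

lemma sr_le1_of_bounded:
  assumes X: "X \<in> carrier_mat n n" and n: "n > 0"
    and bnd: "\<And>k i j. i < n \<Longrightarrow> j < n \<Longrightarrow> \<bar>(X ^\<^sub>m k) $$ (i,j)\<bar> \<le> C"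
  shows "sr X \<le> 1"
proof (rule ccontr)
  assume gt: "\<not> sr X \<le> 1"
  obtain lam v where ev: "eigenvector (cm X) v lam" and nl: "cmod lam = sr X"
    using sr_eig[OF X n] by auto
  have cX: "cm X \<in> carrier_mat n n" using X by auto
  have v: "v \<in> carrier_vec n" "v \<noteq> 0\<^sub>v n"
    using ev X unfolding eigenvector_def by auto
  obtain i where i: "i < n" "v $ i \<noteq> 0" using vec_nonzero_idx[OF v] by auto
  define S where "S = (\<Sum>j<n. cmod (v $ j))"
  have bound: "cmod lam ^ k * cmod (v $ i) \<le> C * S" for k
  proof -
    have "cm X ^\<^sub>m k *\<^sub>v v = lam ^ k \<cdot>\<^sub>v v" by (rule eigenvector_pow[OF cX ev])
    moreover have "cm X ^\<^sub>m k = cm (X ^\<^sub>m k)" by (rule of_real_hom.mat_hom_pow[OF X, symmetric])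
    ultimately have eq: "cm (X ^\<^sub>m k) *\<^sub>v v = lam ^ k \<cdot>\<^sub>v v" by simp
    have "(cm (X ^\<^sub>m k) *\<^sub>v v) $ i = (\<Sum>j<n. cm (X ^\<^sub>m k) $$ (i,j) * v $ j)"
      by (rule idx_mult_vec, use X v i in auto)
    also have "\<dots> = (\<Sum>j<n. complex_of_real ((X ^\<^sub>m k) $$ (i,j)) * v $ j)"
      using X i by (auto intro!: sum.cong)
    finally have e2: "lam ^ k * v $ i = (\<Sum>j<n. complex_of_real ((X ^\<^sub>m k) $$ (i,j)) * v $ j)"
      using eq i v by simp
    have "cmod (lam ^ k * v $ i) \<le> (\<Sum>j<n. cmod (complex_of_real ((X ^\<^sub>m k) $$ (i,j)) * v $ j))"
      unfolding e2 by (rule norm_sum)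
    also have "\<dots> \<le> (\<Sum>j<n. C * cmod (v $ j))"
      by (rule sum_mono, simp add: norm_mult, rule mult_right_mono, use bnd i in auto)
    finally show ?thesis by (simp add: norm_mult norm_power S_def sum_distrib_left)
  qed
  have lg: "1 < cmod lam" using gt nl by simp
  have vi: "cmod (v $ i) > 0" using i by simp
  obtain k where "C * S / cmod (v $ i) < cmod lam ^ k" using real_arch_pow[OF lg] by blast
  then have "C * S < cmod lam ^ k * cmod (v $ i)" using vi by (simp add: field_simps)
  with bound[of k] show False by simp
qed

lemma sr_less1_bounded:
  assumes X: "X \<in> carrier_mat n n" and lt: "sr X < 1"
  shows "\<exists>C. \<forall>k i j. i < n \<longrightarrow> j < n \<longrightarrow> \<bar>(X ^\<^sub>m k) $$ (i,j)\<bar> \<le> C"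
proof -
  have cX: "cm X \<in> carrier_mat n n" using X by auto
  obtain C where C: "\<And>k. norm_bound (cm X ^\<^sub>m k) C"
    using spectral_radius_jnf_norm_bound_less_1_upper_triangular[OF cX] lt unfolding sr_def by auto
  show ?thesis
  proof (intro exI allI impI)
    fix k i j assume ij: "i < n" "j < n"
    have "cm X ^\<^sub>m k = cm (X ^\<^sub>m k)" by (rule of_real_hom.mat_hom_pow[OF X, symmetric])
    with C[of k] have "norm_bound (cm (X ^\<^sub>m k)) C" by simp
    then have "norm (cm (X ^\<^sub>m k) $$ (i,j)) \<le> C" unfolding norm_bound_def using ij X by auto
    then show "\<bar>(X ^\<^sub>m k) $$ (i,j)\<bar> \<le> C" using ij X by simp
  qed
qed

lemma sr_decay:
  assumes X: "X \<in> carrier_mat n n" and n: "n > 0" and lt: "sr X < 1"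
  shows "\<exists>C s. 0 < s \<and> s < 1 \<and> (\<forall>k i j. i < n \<longrightarrow> j < n \<longrightarrow> \<bar>(X ^\<^sub>m k) $$ (i,j)\<bar> \<le> C * s ^ k)"
proof -
  define s where "s = (1 + sr X) / 2"
  have s0: "0 < s" "s < 1" "sr X < s" using sr_nonneg[OF X n] lt unfolding s_def by auto
  define Y where "Y = (1/s) \<cdot>\<^sub>m X"
  have Y: "Y \<in> carrier_mat n n" using X unfolding Y_def by auto
  have "sr Y = (1/s) * sr X" unfolding Y_def by (rule sr_scale[OF X n], use s0 in simp)
  also have "\<dots> < 1" using s0 by (simp add: field_simps)
  finally obtain C where C: "\<And>k i j. i < n \<Longrightarrow> j < n \<Longrightarrow> \<bar>(Y ^\<^sub>m k) $$ (i,j)\<bar> \<le> C"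
    using sr_less1_bounded[OF Y] by blast
  have XY: "X = s \<cdot>\<^sub>m Y" unfolding Y_def using s0 X by (auto intro!: eq_matI)
  show ?thesis
  proof (intro exI conjI allI impI)
    fix k i j assume ij: "i < n" "j < n"
    have "X ^\<^sub>m k = s ^ k \<cdot>\<^sub>m (Y ^\<^sub>m k)" unfolding XY by (rule smult_pow_mat[OF Y])
    then have "(X ^\<^sub>m k) $$ (i,j) = s ^ k * (Y ^\<^sub>m k) $$ (i,j)" using ij Y by simp
    then have "\<bar>(X ^\<^sub>m k) $$ (i,j)\<bar> = s ^ k * \<bar>(Y ^\<^sub>m k) $$ (i,j)\<bar>" using s0 by (simp add: abs_mult)
    also have "\<dots> \<le> s ^ k * C" by (rule mult_left_mono, use C ij s0 in auto)
    finally show "\<bar>(X ^\<^sub>m k) $$ (i,j)\<bar> \<le> C * s ^ k" by (simp add: mult.commute)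
  qed (use s0 in auto)
qed

lemma fin_pos:
  fixes f :: "nat \<Rightarrow> real"
  assumes "\<forall>i<n. 0 < f i"
  shows "\<exists>e>0. \<forall>i<n. e \<le> f i"
  using assms
proof (induct n)
  case 0 then show ?case by (intro exI[of _ 1]) auto
next
  case (Suc n)
  then obtain e where e: "e > 0" "\<forall>i<n. e \<le> f i" by auto
  show ?case
    by (rule exI[of _ "min e (f n)"], use e Suc.prems less_Suc_eq in auto)
qed

lemma nonneg_pow:
  assumes X: "X \<in> carrier_mat n n" and nn: "nonneg_mat X"
  shows "nonneg_mat (X ^\<^sub>m k)"
proof (induct k)
  case 0 then show ?case using X by (auto simp: nonneg_mat_def)
next
  case (Suc k)
  show ?case unfolding nonneg_mat_def
  proof (intro allI impI)
    fix i j assume ij: "i < dim_row (X ^\<^sub>m Suc k)" "j < dim_col (X ^\<^sub>m Suc k)"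
    then have ij': "i < n" "j < n" using X by auto
    have "(X ^\<^sub>m Suc k) $$ (i,j) = (\<Sum>l<n. (X ^\<^sub>m k) $$ (i,l) * X $$ (l,j))"
      by (simp, rule idx_mult, use X ij' in auto)
    also have "\<dots> \<ge> 0"
      by (rule sum_nonneg, rule mult_nonneg_nonneg, use Suc nn X ij' in \<open>auto simp: nonneg_mat_def\<close>)
    finally show "(X ^\<^sub>m Suc k) $$ (i,j) \<ge> 0" .
  qed
qed

lemma nonneg_smult:
  assumes "nonneg_mat X" "t \<ge> 0"
  shows "nonneg_mat (t \<cdot>\<^sub>m X)"
  using assms by (auto simp: nonneg_mat_def)

lemma mono_mv:
  assumes P: "P \<in> carrier_mat n n" and nn: "nonneg_mat P"
    and dims: "dim_vec y = n" "dim_vec z = n" and le: "\<forall>j<n. y $ j \<le> z $ j" and i: "i < n"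
  shows "(P *\<^sub>v y) $ i \<le> (P *\<^sub>v z) $ i"
proof -
  have "(P *\<^sub>v y) $ i = (\<Sum>j<n. P $$ (i,j) * y $ j)" by (rule idx_mult_vec, use P dims i in auto)
  also have "\<dots> \<le> (\<Sum>j<n. P $$ (i,j) * z $ j)"
    by (rule sum_mono, rule mult_left_mono, use le nn P i in \<open>auto simp: nonneg_mat_def\<close>)
  also have "\<dots> = (P *\<^sub>v z) $ i" by (rule idx_mult_vec[symmetric], use P dims i in auto)
  finally show ?thesis .
qed

lemma pow_ge:
  assumes Z: "Z \<in> carrier_mat n n" and nn: "nonneg_mat Z" and x: "dim_vec x = n"
    and ge: "\<forall>i<n. x $ i \<le> (Z *\<^sub>v x) $ i"
  shows "\<forall>i<n. x $ i \<le> (Z ^\<^sub>m k *\<^sub>v x) $ i"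
proof (induct k)
  case 0
  have xc: "x \<in> carrier_vec n" by (rule carrier_vecI[OF x])
  have e1: "Z ^\<^sub>m 0 = 1\<^sub>m n" unfolding pow_mat.simps(1) carrier_matD(1)[OF Z] by (rule refl)
  have e2: "1\<^sub>m n *\<^sub>v x = x" by (rule one_mult_mat_vec[OF xc])
  show ?case unfolding e1 e2 by simp
next
  case (Suc k)
  have xc: "x \<in> carrier_vec n" by (rule carrier_vecI[OF x])
  have eq: "Z ^\<^sub>m Suc k *\<^sub>v x = Z ^\<^sub>m k *\<^sub>v (Z *\<^sub>v x)"
    using assoc_mult_mat_vec[OF pow_carrier_mat[OF Z] Z xc] by simp
  show ?case
  proof (intro allI impI)
    fix i assume i: "i < n"
    have "x $ i \<le> (Z ^\<^sub>m k *\<^sub>v x) $ i" using Suc i by auto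
    also have "\<dots> \<le> (Z ^\<^sub>m k *\<^sub>v (Z *\<^sub>v x)) $ i"
      by (rule mono_mv[OF pow_carrier_mat[OF Z] nonneg_pow[OF Z nn]], use x Z ge i in auto)
    finally show "x $ i \<le> (Z ^\<^sub>m Suc k *\<^sub>v x) $ i" using eq by simp
  qed
qed

lemma pow_le:
  assumes Z: "Z \<in> carrier_mat n n" and nn: "nonneg_mat Z" and x: "dim_vec x = n"
    and le: "\<forall>i<n. (Z *\<^sub>v x) $ i \<le> x $ i"
  shows "\<forall>i<n. (Z ^\<^sub>m k *\<^sub>v x) $ i \<le> x $ i"
proof (induct k)
  case 0
  have xc: "x \<in> carrier_vec n" by (rule carrier_vecI[OF x])
  have e1: "Z ^\<^sub>m 0 = 1\<^sub>m n" unfolding pow_mat.simps(1) carrier_matD(1)[OF Z] by (rule refl)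
  have e2: "1\<^sub>m n *\<^sub>v x = x" by (rule one_mult_mat_vec[OF xc])
  show ?case unfolding e1 e2 by simp
next
  case (Suc k)
  have xc: "x \<in> carrier_vec n" by (rule carrier_vecI[OF x])
  have eq: "Z ^\<^sub>m Suc k *\<^sub>v x = Z ^\<^sub>m k *\<^sub>v (Z *\<^sub>v x)"
    using assoc_mult_mat_vec[OF pow_carrier_mat[OF Z] Z xc] by simp
  show ?case
  proof (intro allI impI)
    fix i assume i: "i < n"
    have "(Z ^\<^sub>m k *\<^sub>v (Z *\<^sub>v x)) $ i \<le> (Z ^\<^sub>m k *\<^sub>v x) $ i"
      by (rule mono_mv[OF pow_carrier_mat[OF Z] nonneg_pow[OF Z nn]], use x Z le i in auto)
    also have "\<dots> \<le> x $ i" using Suc i by auto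
    finally show "(Z ^\<^sub>m Suc k *\<^sub>v x) $ i \<le> x $ i" using eq by simp
  qed
qed

lemma smult_mv:
  assumes X: "X \<in> carrier_mat n n" and x: "dim_vec x = n" and i: "i < n"
  shows "((t::real) \<cdot>\<^sub>m X *\<^sub>v x) $ i = t * (X *\<^sub>v x) $ i"
proof -
  have "((t::real) \<cdot>\<^sub>m X *\<^sub>v x) $ i = (\<Sum>j<n. (t \<cdot>\<^sub>m X) $$ (i,j) * x $ j)"
    by (rule idx_mult_vec, use X x i in auto)
  also have "\<dots> = t * (\<Sum>j<n. X $$ (i,j) * x $ j)"
    using X i by (auto simp: sum_distrib_left intro!: sum.cong)
  also have "(\<Sum>j<n. X $$ (i,j) * x $ j) = (X *\<^sub>v x) $ i"
    by (rule idx_mult_vec[symmetric], use X x i in auto)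
  finally show ?thesis .
qed

lemma sr_lower:
  assumes X: "X \<in> carrier_mat n n" and nn: "nonneg_mat X" and x: "dim_vec x = n"
    and xnn: "\<forall>i<n. 0 \<le> x $ i" and i0: "i0 < n" "x $ i0 > 0" and sg: "\<sigma> > 0"
    and ge: "\<forall>i<n. \<sigma> * x $ i \<le> (X *\<^sub>v x) $ i"
  shows "\<sigma> \<le> sr X"
proof (rule ccontr)
  assume "\<not> \<sigma> \<le> sr X"
  then have lt: "sr X < \<sigma>" by simp
  have n: "n > 0" using i0 by auto
  define Z where "Z = (1/\<sigma>) \<cdot>\<^sub>m X"
  have Z: "Z \<in> carrier_mat n n" using X unfolding Z_def by auto
  have Znn: "nonneg_mat Z" unfolding Z_def by (rule nonneg_smult[OF nn], use sg in simp)
  have Zge: "\<forall>i<n. x $ i \<le> (Z *\<^sub>v x) $ i"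
  proof (intro allI impI)
    fix i assume i: "i < n"
    have "(Z *\<^sub>v x) $ i = (1/\<sigma>) * (X *\<^sub>v x) $ i" unfolding Z_def by (rule smult_mv[OF X x i])
    then have "\<sigma> * x $ i \<le> \<sigma> * (Z *\<^sub>v x) $ i" using ge i sg by simp
    then show "x $ i \<le> (Z *\<^sub>v x) $ i" using sg by simp
  qed
  have "sr Z = (1/\<sigma>) * sr X" unfolding Z_def by (rule sr_scale[OF X n], use sg in simp)
  also have "\<dots> < 1" using lt sg by (simp add: field_simps)
  finally obtain C s where s: "0 < s" "s < 1"
    and C: "\<And>k i j. i < n \<Longrightarrow> j < n \<Longrightarrow> \<bar>(Z ^\<^sub>m k) $$ (i,j)\<bar> \<le> C * s ^ k"
    using sr_decay[OF Z n] by blast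
  define S where "S = (\<Sum>j<n. x $ j)"
  have S0: "S \<ge> 0" unfolding S_def by (rule sum_nonneg, use xnn in auto)
  have bound: "x $ i0 \<le> C * S * s ^ k" for k
  proof -
    have "x $ i0 \<le> (Z ^\<^sub>m k *\<^sub>v x) $ i0" using pow_ge[OF Z Znn x Zge] i0 by auto
    also have "\<dots> = (\<Sum>j<n. (Z ^\<^sub>m k) $$ (i0,j) * x $ j)" by (rule idx_mult_vec, use Z x i0 in auto)
    also have "\<dots> \<le> (\<Sum>j<n. C * s ^ k * x $ j)"
    proof (rule sum_mono)
      fix j assume j: "j \<in> {..<n}"
      have "(Z ^\<^sub>m k) $$ (i0,j) \<le> C * s ^ k" using C[of i0 j k] i0 j by auto
      then show "(Z ^\<^sub>m k) $$ (i0,j) * x $ j \<le> C * s ^ k * x $ j"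
        by (rule mult_right_mono, use xnn j in auto)
    qed
    also have "\<dots> = C * S * s ^ k" unfolding S_def by (simp add: sum_distrib_left mult_ac)
    finally show ?thesis .
  qed
  show False
  proof (cases "C * S > 0")
    case True
    have "0 < x $ i0 / (C * S)" using True i0 by simp
    from real_arch_pow_inv[OF this s(2)] obtain k where "s ^ k < x $ i0 / (C * S)" by auto
    then have "C * S * s ^ k < x $ i0" using True by (simp add: field_simps)
    with bound[of k] show False by simp
  next
    case False
    then show False using bound[of 0] i0 by simp
  qed
qed

lemma sr_upper:
  assumes X: "X \<in> carrier_mat n n" and nn: "nonneg_mat X" and x: "dim_vec x = n"
    and xp: "\<forall>i<n. 0 < x $ i" and n: "n > 0" and s: "s > 0"
    and le: "\<forall>i<n. (X *\<^sub>v x) $ i \<le> s * x $ i"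
  shows "sr X \<le> s"
proof -
  define Z where "Z = (1/s) \<cdot>\<^sub>m X"
  have Z: "Z \<in> carrier_mat n n" using X unfolding Z_def by auto
  have Znn: "nonneg_mat Z" unfolding Z_def by (rule nonneg_smult[OF nn], use s in simp)
  have Zle: "\<forall>i<n. (Z *\<^sub>v x) $ i \<le> x $ i"
  proof (intro allI impI)
    fix i assume i: "i < n"
    have "(Z *\<^sub>v x) $ i = (1/s) * (X *\<^sub>v x) $ i" unfolding Z_def by (rule smult_mv[OF X x i])
    then have "s * (Z *\<^sub>v x) $ i \<le> s * x $ i" using le i s by simp
    then show "(Z *\<^sub>v x) $ i \<le> x $ i" using s by simp
  qed
  have xnn: "\<forall>i<n. 0 \<le> x $ i" using xp by (auto intro: less_imp_le)
  define S where "S = (\<Sum>j<n. x $ j)"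
  define T where "T = (\<Sum>j<n. 1 / x $ j)"
  have bnd: "\<bar>(Z ^\<^sub>m k) $$ (i,j)\<bar> \<le> S * T" if ij: "i < n" "j < n" for k i j
  proof -
    have nnk: "nonneg_mat (Z ^\<^sub>m k)" by (rule nonneg_pow[OF Z Znn])
    then have e0: "(Z ^\<^sub>m k) $$ (i,j) \<ge> 0" using ij Z unfolding nonneg_mat_def by auto
    have "(Z ^\<^sub>m k) $$ (i,j) * x $ j \<le> (\<Sum>l<n. (Z ^\<^sub>m k) $$ (i,l) * x $ l)"
      by (rule member_le_sum[where f = "\<lambda>l. (Z ^\<^sub>m k) $$ (i,l) * x $ l"],
          use ij nnk Z xnn in \<open>auto simp: nonneg_mat_def intro!: mult_nonneg_nonneg\<close>)
    also have "\<dots> = (Z ^\<^sub>m k *\<^sub>v x) $ i" by (rule idx_mult_vec[symmetric], use Z x ij in auto)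
    also have "\<dots> \<le> x $ i" using pow_le[OF Z Znn x Zle] ij by auto
    finally have "(Z ^\<^sub>m k) $$ (i,j) \<le> x $ i * (1 / x $ j)" using xp ij by (simp add: field_simps)
    also have "\<dots> \<le> S * T"
    proof (rule mult_mono)
      show "x $ i \<le> S" unfolding S_def
        by (rule member_le_sum[where f = "\<lambda>l. x $ l"], use ij xp in \<open>auto intro: less_imp_le\<close>)
      show "1 / x $ j \<le> T" unfolding T_def
        by (rule member_le_sum[where f = "\<lambda>l. 1 / x $ l"], use ij xp in \<open>auto intro: less_imp_le\<close>)
      show "0 \<le> S" unfolding S_def by (rule sum_nonneg, use xp in \<open>auto intro: less_imp_le\<close>)
      show "0 \<le> 1 / x $ j" using xp ij by auto
    qed
    finally show ?thesis using e0 by simp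
  qed
  have "sr Z \<le> 1" by (rule sr_le1_of_bounded[OF Z n bnd])
  moreover have "sr Z = (1/s) * sr X" unfolding Z_def by (rule sr_scale[OF X n], use s in simp)
  ultimately show ?thesis using s by (simp add: field_simps)
qed

lemma perron:
  assumes Y: "Y \<in> carrier_mat n n" and n: "n > 0"
    and pos: "\<forall>i<n. \<forall>j<n. Y $$ (i,j) > 0"
  shows "\<exists>u. dim_vec u = n \<and> (\<forall>i<n. u $ i > 0) \<and> (\<forall>i<n. (Y *\<^sub>v u) $ i = sr Y * u $ i)"
proof -
  have nn: "nonneg_mat Y" using pos Y unfolding nonneg_mat_def by (auto intro: less_imp_le)
  have Ynn: "\<forall>i<n. \<forall>j<n. 0 \<le> Y $$ (i,j)" using pos by (auto intro: less_imp_le)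
  obtain lam v where ev: "eigenvector (cm Y) v lam" and nl: "cmod lam = sr Y"
    using sr_eig[OF Y n] by auto
  have v: "v \<in> carrier_vec n" "v \<noteq> 0\<^sub>v n" "cm Y *\<^sub>v v = lam \<cdot>\<^sub>v v"
    using ev Y unfolding eigenvector_def by auto
  define u where "u = vec n (\<lambda>i. cmod (v $ i))"
  define \<rho> where "\<rho> = sr Y"
  have rho0: "\<rho> \<ge> 0" unfolding \<rho>_def by (rule sr_nonneg[OF Y n])
  have du: "dim_vec u = n" unfolding u_def by simp
  have unn: "\<forall>i<n. 0 \<le> u $ i" unfolding u_def by simp
  obtain i0 where i0: "i0 < n" "v $ i0 \<noteq> 0" using vec_nonzero_idx[OF v(1,2)] by auto
  have ui0: "u $ i0 > 0" using i0 unfolding u_def by simp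
  have Yu: "(Y *\<^sub>v u) $ i = (\<Sum>j<n. Y $$ (i,j) * u $ j)" if "i < n" for i
    by (rule idx_mult_vec, use Y du that in auto)
  have ge: "\<forall>i<n. \<rho> * u $ i \<le> (Y *\<^sub>v u) $ i"
  proof (intro allI impI)
    fix i assume i: "i < n"
    have "(cm Y *\<^sub>v v) $ i = (\<Sum>j<n. cm Y $$ (i,j) * v $ j)"
      by (rule idx_mult_vec, use Y v i in auto)
    also have "\<dots> = (\<Sum>j<n. complex_of_real (Y $$ (i,j)) * v $ j)"
      using Y i by (auto intro!: sum.cong)
    finally have e1: "lam * v $ i = (\<Sum>j<n. complex_of_real (Y $$ (i,j)) * v $ j)"
      using v i by simp
    have "\<rho> * u $ i = cmod (lam * v $ i)" unfolding \<rho>_def u_def using nl i by (simp add: norm_mult)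
    also have "\<dots> \<le> (\<Sum>j<n. cmod (complex_of_real (Y $$ (i,j)) * v $ j))"
      unfolding e1 by (rule norm_sum)
    also have "\<dots> = (\<Sum>j<n. Y $$ (i,j) * u $ j)"
    proof (rule sum.cong)
      fix j assume j: "j \<in> {..<n}"
      have "Y $$ (i,j) \<ge> 0" using pos i j by (auto intro: less_imp_le)
      then show "cmod (complex_of_real (Y $$ (i,j)) * v $ j) = Y $$ (i,j) * u $ j"
        using j unfolding u_def by (simp add: norm_mult)
    qed simp
    also have "\<dots> = (Y *\<^sub>v u) $ i" using Yu[OF i] by simp
    finally show "\<rho> * u $ i \<le> (Y *\<^sub>v u) $ i" .
  qed
  have Yupos: "\<forall>i<n. (Y *\<^sub>v u) $ i > 0"
  proof (intro allI impI)
    fix i assume i: "i < n"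
    have "0 < Y $$ (i,i0) * u $ i0" using pos i i0 ui0 by simp
    also have "\<dots> \<le> (\<Sum>j<n. Y $$ (i,j) * u $ j)"
      by (rule member_le_sum[where f = "\<lambda>j. Y $$ (i,j) * u $ j"],
          use i0 i Ynn unn in \<open>auto intro!: mult_nonneg_nonneg\<close>)
    finally show "(Y *\<^sub>v u) $ i > 0" using Yu[OF i] by simp
  qed
  have eq: "\<forall>i<n. (Y *\<^sub>v u) $ i = \<rho> * u $ i"
  proof (rule ccontr)
    assume "\<not> ?thesis"
    then obtain i1 where i1: "i1 < n" "(Y *\<^sub>v u) $ i1 \<noteq> \<rho> * u $ i1" by auto
    with ge have gt1: "\<rho> * u $ i1 < (Y *\<^sub>v u) $ i1" by force
    define w where "w = Y *\<^sub>v u"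
    have dw: "dim_vec w = n" unfolding w_def using Y by simp
    have wpos: "\<forall>i<n. w $ i > 0" unfolding w_def using Yupos by simp
    have strict: "\<forall>i<n. \<rho> * w $ i < (Y *\<^sub>v w) $ i"
    proof (intro allI impI)
      fix i assume i: "i < n"
      have Yw: "(Y *\<^sub>v w) $ i = (\<Sum>j<n. Y $$ (i,j) * w $ j)"
        by (rule idx_mult_vec, use Y dw i in auto)
      have rw: "\<rho> * w $ i = (\<Sum>j<n. Y $$ (i,j) * (\<rho> * u $ j))"
        unfolding w_def using Yu[OF i] by (simp add: sum_distrib_left mult_ac)
      have "(Y *\<^sub>v w) $ i - \<rho> * w $ i = (\<Sum>j<n. Y $$ (i,j) * (w $ j - \<rho> * u $ j))"
        unfolding Yw rw by (simp add: sum_subtractf right_diff_distrib)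
      also have "\<dots> \<ge> Y $$ (i,i1) * (w $ i1 - \<rho> * u $ i1)"
        by (rule member_le_sum[where f = "\<lambda>j. Y $$ (i,j) * (w $ j - \<rho> * u $ j)"],
            use i1 i Ynn ge in \<open>auto simp: w_def intro!: mult_nonneg_nonneg\<close>)
      finally have "(Y *\<^sub>v w) $ i - \<rho> * w $ i \<ge> Y $$ (i,i1) * (w $ i1 - \<rho> * u $ i1)" .
      moreover have "Y $$ (i,i1) * (w $ i1 - \<rho> * u $ i1) > 0"
        using pos i i1 gt1 unfolding w_def by simp
      ultimately show "\<rho> * w $ i < (Y *\<^sub>v w) $ i" by simp
    qed
    obtain e where e: "e > 0" "\<forall>i<n. e \<le> ((Y *\<^sub>v w) $ i - \<rho> * w $ i) / w $ i"
      using fin_pos[of n "\<lambda>i. ((Y *\<^sub>v w) $ i - \<rho> * w $ i) / w $ i"] strict wpos by auto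
    have "\<forall>i<n. (\<rho> + e) * w $ i \<le> (Y *\<^sub>v w) $ i"
    proof (intro allI impI)
      fix i assume i: "i < n"
      have "e * w $ i \<le> (Y *\<^sub>v w) $ i - \<rho> * w $ i"
        using e(2) i wpos by (simp add: field_simps)
      then show "(\<rho> + e) * w $ i \<le> (Y *\<^sub>v w) $ i" by (simp add: algebra_simps)
    qed
    from sr_lower[OF Y nn dw _ i0(1) _ _ this] wpos i0 rho0 e
    have "\<rho> + e \<le> sr Y" by (auto intro: less_imp_le)
    then show False using e unfolding \<rho>_def by simp
  qed
  have upos: "\<forall>i<n. u $ i > 0"
  proof (intro allI impI)
    fix i assume i: "i < n"
    show "u $ i > 0"
    proof (cases "\<rho> = 0")
      case True
      then show ?thesis using eq Yupos i by auto
    next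
      case False
      then have "\<rho> > 0" using rho0 by simp
      moreover have "\<rho> * u $ i > 0" using eq Yupos i by auto
      ultimately show ?thesis by (simp add: zero_less_mult_iff)
    qed
  qed
  show ?thesis using du upos eq unfolding \<rho>_def by auto
qed

lemma diag_carrier[simp]: "diag_of n d \<in> carrier_mat n n"
  unfolding diag_of_def by simp

lemma diag_idx: "i < n \<Longrightarrow> j < n \<Longrightarrow> diag_of n d $$ (i,j) = (if i = j then d i else 0)"
  unfolding diag_of_def by simp

lemma diag_right:
  assumes K: "K \<in> carrier_mat n n" and ij: "i < n" "j < n"
  shows "(K * diag_of n d) $$ (i,j) = K $$ (i,j) * d j"
proof -
  have "(K * diag_of n d) $$ (i,j) = (\<Sum>k<n. K $$ (i,k) * diag_of n d $$ (k,j))"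
    by (rule idx_mult[OF K diag_carrier ij])
  also have "\<dots> = (\<Sum>k<n. if k = j then K $$ (i,j) * d j else 0)"
    by (rule sum.cong, auto simp: diag_idx ij)
  also have "\<dots> = K $$ (i,j) * d j" using ij by (simp add: sum.delta)
  finally show ?thesis .
qed

lemma diag_left:
  assumes K: "K \<in> carrier_mat n n" and ij: "i < n" "j < n"
  shows "(diag_of n d * K) $$ (i,j) = d i * K $$ (i,j)"
proof -
  have "(diag_of n d * K) $$ (i,j) = (\<Sum>k<n. diag_of n d $$ (i,k) * K $$ (k,j))"
    by (rule idx_mult[OF diag_carrier K ij])
  also have "\<dots> = (\<Sum>k<n. if k = i then d i * K $$ (i,j) else 0)"
    by (rule sum.cong, auto simp: diag_idx ij)
  also have "\<dots> = d i * K $$ (i,j)" using ij by (simp add: sum.delta)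
  finally show ?thesis .
qed

lemma irr_path:
  assumes X: "X \<in> carrier_mat n n" and nn: "nonneg_mat X"
    and tr: "(i,j) \<in> {(a,b). a < n \<and> b < n \<and> X $$ (a,b) \<noteq> 0}\<^sup>+"
  shows "\<exists>p. (X ^\<^sub>m p) $$ (i,j) > 0"
  using tr
proof (induct rule: trancl_induct)
  case (base y)
  then have y: "i < n" "y < n" "X $$ (i,y) \<noteq> 0" by auto
  have "X $$ (i,y) \<ge> 0" using nn X y unfolding nonneg_mat_def by auto
  with y have pos: "X $$ (i,y) > 0" by simp
  have "X ^\<^sub>m 1 = X" using X by simp
  with pos show ?case by (intro exI[of _ 1]) simp
next
  case (step y z)
  then obtain p where p: "(X ^\<^sub>m p) $$ (i,y) > 0" by auto
  from step(1) have i: "i < n" by (induct rule: trancl_induct) auto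
  from step(2) have yz: "y < n" "z < n" "X $$ (y,z) \<noteq> 0" by auto
  have Xyz: "X $$ (y,z) > 0" using nn X yz unfolding nonneg_mat_def by (auto simp: less_le)
  have nnp: "nonneg_mat (X ^\<^sub>m p)" by (rule nonneg_pow[OF X nn])
  have "(X ^\<^sub>m Suc p) $$ (i,z) = (\<Sum>l<n. (X ^\<^sub>m p) $$ (i,l) * X $$ (l,z))"
    by (simp, rule idx_mult, use X i yz in auto)
  also have "\<dots> \<ge> (X ^\<^sub>m p) $$ (i,y) * X $$ (y,z)"
    by (rule member_le_sum[where f = "\<lambda>l. (X ^\<^sub>m p) $$ (i,l) * X $$ (l,z)"],
        use yz i nnp nn X in \<open>auto simp: nonneg_mat_def intro!: mult_nonneg_nonneg\<close>)
  finally have "(X ^\<^sub>m Suc p) $$ (i,z) > 0" using p Xyz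
    by (meson less_le_trans mult_pos_pos)
  then show ?case by blast
qed

lemma neumann:
  assumes At: "At \<in> carrier_mat n n" and nn: "nonneg_mat At" and irr: "irreducible_mat At"
    and lt: "sr At < 1" and n: "n > 0"
  shows "\<exists>N. mat_inverse (1\<^sub>m n - At) = Some N \<and> N \<in> carrier_mat n n \<and>
    At * N = N - 1\<^sub>m n \<and> N * At = N - 1\<^sub>m n \<and> (\<forall>i<n. \<forall>j<n. N $$ (i,j) > 0)"
proof -
  define IA where "IA = 1\<^sub>m n - At"
  have IA: "IA \<in> carrier_mat n n" unfolding IA_def by (rule carrier_matI, use At in auto)
  have det: "det IA \<noteq> 0"
  proof
    assume "det IA = 0"
    then obtain v where v: "v \<in> carrier_vec n" "v \<noteq> 0\<^sub>v n" "IA *\<^sub>v v = 0\<^sub>v n"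
      using det_0_iff_vec_prod_zero[OF IA] by auto
    have "IA *\<^sub>v v = 1\<^sub>m n *\<^sub>v v - At *\<^sub>v v" unfolding IA_def
      by (rule minus_mult_distrib_mat_vec[OF _ At v(1)], simp)
    also have "1\<^sub>m n *\<^sub>v v = v" using v(1) by simp
    finally have e: "v - At *\<^sub>v v = 0\<^sub>v n" using v(3) by simp
    have Av: "At *\<^sub>v v = v"
    proof (rule eq_vecI)
      fix i assume i: "i < dim_vec v"
      have "(v - At *\<^sub>v v) $ i = 0" using e i v(1) by simp
      then show "(At *\<^sub>v v) $ i = v $ i" using i At v(1) by simp
    qed (use At v(1) in simp)
    define vr where "vr = map_vec complex_of_real v"
    have vr: "vr \<in> carrier_vec n" "vr \<noteq> 0\<^sub>v n" unfolding vr_def using v(1,2) by auto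
    have "cm At *\<^sub>v vr = map_vec complex_of_real (At *\<^sub>v v)"
      unfolding vr_def by (rule of_real_hom.mult_mat_vec_hom[OF At v(1), symmetric])
    also have "\<dots> = vr" unfolding Av vr_def ..
    finally have "cm At *\<^sub>v vr = 1 \<cdot>\<^sub>v vr" by simp
    then have "eigenvector (cm At) vr 1" unfolding eigenvector_def using vr At by simp
    from sr_ge_eig[OF At this] lt show False by simp
  qed
  have unit: "IA \<in> Units (ring_mat TYPE(real) n n)" by (rule det_non_zero_imp_unit[OF IA det])
  obtain N where mi: "mat_inverse IA = Some N"
    using mat_inverse(1)[OF IA, of n] unit by (cases "mat_inverse IA") auto
  from mat_inverse(2)[OF IA mi] have inv: "IA * N = 1\<^sub>m n" "N * IA = 1\<^sub>m n" "N \<in> carrier_mat n n"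
    by auto
  have N: "N \<in> carrier_mat n n" using inv by simp
  have e1: "IA * N = N - At * N" unfolding IA_def
    using minus_mult_distrib_mat[OF _ At N, of "1\<^sub>m n"] N by simp
  have e2: "N * IA = N - N * At" unfolding IA_def
    using mult_minus_distrib_mat[OF N _ At, of "1\<^sub>m n"] N by simp
  have AtN: "At * N = N - 1\<^sub>m n"
  proof (rule eq_matI)
    fix i j assume ij: "i < dim_row (N - 1\<^sub>m n)" "j < dim_col (N - 1\<^sub>m n)"
    then have ij': "i < n" "j < n" using N by auto
    have "(N - At * N) $$ (i,j) = 1\<^sub>m n $$ (i,j)" using e1 inv(1) by simp
    then show "(At * N) $$ (i,j) = (N - 1\<^sub>m n) $$ (i,j)" using ij' N At by simp
  qed (use N At in auto)
  have NAt: "N * At = N - 1\<^sub>m n"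
  proof (rule eq_matI)
    fix i j assume ij: "i < dim_row (N - 1\<^sub>m n)" "j < dim_col (N - 1\<^sub>m n)"
    then have ij': "i < n" "j < n" using N by auto
    have "(N - N * At) $$ (i,j) = 1\<^sub>m n $$ (i,j)" using e2 inv(2) by simp
    then show "(N * At) $$ (i,j) = (N - 1\<^sub>m n) $$ (i,j)" using ij' N At by simp
  qed (use N At in auto)
  have rec: "At ^\<^sub>m Suc m * N = At ^\<^sub>m m * N - At ^\<^sub>m m" for m
  proof -
    have Pm: "At ^\<^sub>m m \<in> carrier_mat n n" using At by simp
    have "At ^\<^sub>m Suc m * N = (At ^\<^sub>m m * At) * N" by simp
    also have "\<dots> = At ^\<^sub>m m * (At * N)" by (rule assoc_mult_mat[OF Pm At N])
    also have "\<dots> = At ^\<^sub>m m * (N - 1\<^sub>m n)" unfolding AtN ..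
    also have "\<dots> = At ^\<^sub>m m * N - At ^\<^sub>m m * 1\<^sub>m n"
      by (rule mult_minus_distrib_mat[OF Pm N], simp)
    also have "At ^\<^sub>m m * 1\<^sub>m n = At ^\<^sub>m m" by (rule right_mult_one_mat[OF Pm])
    finally show ?thesis .
  qed
  have invar: "\<forall>i<n. \<forall>j<n. N $$ (i,j) - (At ^\<^sub>m m * N) $$ (i,j) \<ge> 0 \<and>
      (\<forall>p<m. N $$ (i,j) - (At ^\<^sub>m m * N) $$ (i,j) \<ge> (At ^\<^sub>m p) $$ (i,j))" for m
  proof (induct m)
    case 0
    have "At ^\<^sub>m 0 * N = N" using At N by simp
    then show ?case by simp
  next
    case (Suc m)
    show ?case
    proof (intro allI impI)
      fix i j assume ij: "i < n" "j < n"
      have nnm: "(At ^\<^sub>m m) $$ (i,j) \<ge> 0" using nonneg_pow[OF At nn, of m] ij At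
        unfolding nonneg_mat_def by auto
      have ent: "(At ^\<^sub>m Suc m * N) $$ (i,j) = (At ^\<^sub>m m * N) $$ (i,j) - (At ^\<^sub>m m) $$ (i,j)"
        unfolding rec using ij At N by simp
      have IH: "N $$ (i,j) - (At ^\<^sub>m m * N) $$ (i,j) \<ge> 0"
        "\<forall>p<m. N $$ (i,j) - (At ^\<^sub>m m * N) $$ (i,j) \<ge> (At ^\<^sub>m p) $$ (i,j)"
        using Suc ij by auto
      have c1: "N $$ (i,j) - (At ^\<^sub>m Suc m * N) $$ (i,j) \<ge> 0" using ent IH nnm by simp
      have c2: "\<forall>p<Suc m. N $$ (i,j) - (At ^\<^sub>m Suc m * N) $$ (i,j) \<ge> (At ^\<^sub>m p) $$ (i,j)"
      proof (intro allI impI)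
        fix p assume p: "p < Suc m"
        show "N $$ (i,j) - (At ^\<^sub>m Suc m * N) $$ (i,j) \<ge> (At ^\<^sub>m p) $$ (i,j)"
        proof (cases "p = m")
          case True then show ?thesis using ent IH by simp
        next
          case False then have "p < m" using p by simp
          then show ?thesis using ent IH nnm by force
        qed
      qed
      show "N $$ (i,j) - (At ^\<^sub>m Suc m * N) $$ (i,j) \<ge> 0 \<and>
        (\<forall>p<Suc m. N $$ (i,j) - (At ^\<^sub>m Suc m * N) $$ (i,j) \<ge> (At ^\<^sub>m p) $$ (i,j))"
        using c1 c2 by blast
    qed
  qed
  obtain C s where s: "0 < s" "s < 1"
    and C: "\<And>k i j. i < n \<Longrightarrow> j < n \<Longrightarrow> \<bar>(At ^\<^sub>m k) $$ (i,j)\<bar> \<le> C * s ^ k"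
    using sr_decay[OF At n lt] by blast
  have geq: "N $$ (i,j) \<ge> (At ^\<^sub>m p) $$ (i,j)" if ij: "i < n" "j < n" for i j p
  proof (rule ccontr)
    assume neg: "\<not> N $$ (i,j) \<ge> (At ^\<^sub>m p) $$ (i,j)"
    define d where "d = (At ^\<^sub>m p) $$ (i,j) - N $$ (i,j)"
    have d: "d > 0" using neg unfolding d_def by simp
    define K where "K = \<bar>C\<bar> * (\<Sum>k<n. \<bar>N $$ (k,j)\<bar>) + 1"
    have "0 \<le> \<bar>C\<bar> * (\<Sum>k<n. \<bar>N $$ (k,j)\<bar>)" by (intro mult_nonneg_nonneg sum_nonneg) auto
    then have K: "K > 0" unfolding K_def by linarith
    have bnd: "\<bar>(At ^\<^sub>m m * N) $$ (i,j)\<bar> \<le> K * s ^ m" for m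
    proof -
      have "(At ^\<^sub>m m * N) $$ (i,j) = (\<Sum>k<n. (At ^\<^sub>m m) $$ (i,k) * N $$ (k,j))"
        by (rule idx_mult[OF pow_carrier_mat[OF At] N ij])
      then have "\<bar>(At ^\<^sub>m m * N) $$ (i,j)\<bar> \<le> (\<Sum>k<n. \<bar>(At ^\<^sub>m m) $$ (i,k) * N $$ (k,j)\<bar>)"
        by (simp add: sum_abs)
      also have "\<dots> \<le> (\<Sum>k<n. (\<bar>C\<bar> * s ^ m) * \<bar>N $$ (k,j)\<bar>)"
      proof (rule sum_mono)
        fix k assume k: "k \<in> {..<n}"
        have "\<bar>(At ^\<^sub>m m) $$ (i,k)\<bar> \<le> \<bar>C\<bar> * s ^ m"
          using C[of i k m] ij k s by (smt (verit) mult_right_mono zero_le_power abs_ge_self lessThan_iff)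
        then show "\<bar>(At ^\<^sub>m m) $$ (i,k) * N $$ (k,j)\<bar> \<le> (\<bar>C\<bar> * s ^ m) * \<bar>N $$ (k,j)\<bar>"
          by (simp add: abs_mult mult_right_mono)
      qed
      also have "\<dots> = \<bar>C\<bar> * (\<Sum>k<n. \<bar>N $$ (k,j)\<bar>) * s ^ m"
        by (simp add: sum_distrib_left sum_distrib_right mult_ac)
      also have "\<dots> \<le> K * s ^ m" unfolding K_def using s by (simp add: algebra_simps)
      finally show ?thesis .
    qed
    obtain m where m: "s ^ m < d / K" using real_arch_pow_inv[of "d / K" s] d K s by auto
    define m' where "m' = m + Suc p"
    have "s ^ m' \<le> s ^ m" unfolding m'_def by (rule power_decreasing, use s in auto)
    then have "K * s ^ m' \<le> K * s ^ m" using K by (simp add: mult_left_mono)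
    moreover have "K * s ^ m < d" using m K by (simp add: field_simps)
    ultimately have sm: "K * s ^ m' < d" by linarith
    have "N $$ (i,j) - (At ^\<^sub>m m' * N) $$ (i,j) \<ge> (At ^\<^sub>m p) $$ (i,j)"
      using invar[of m'] ij unfolding m'_def by auto
    moreover have "(At ^\<^sub>m m' * N) $$ (i,j) \<ge> - (K * s ^ m')" using bnd[of m'] by simp
    ultimately show False using sm unfolding d_def by simp
  qed
  have pos: "\<forall>i<n. \<forall>j<n. N $$ (i,j) > 0"
  proof (intro allI impI)
    fix i j assume ij: "i < n" "j < n"
    have "(i,j) \<in> {(a,b). a < n \<and> b < n \<and> At $$ (a,b) \<noteq> 0}\<^sup>+"
      using irr ij At unfolding irreducible_mat_def by auto
    from irr_path[OF At nn this] obtain p where "(At ^\<^sub>m p) $$ (i,j) > 0" by auto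
    with geq[OF ij, of p] show "N $$ (i,j) > 0" by simp
  qed
  show ?thesis using mi N AtN NAt pos unfolding IA_def by auto
qed

lemma sr_upper_strict:
  assumes X: "X \<in> carrier_mat n n" and nn: "nonneg_mat X" and x: "dim_vec x = n"
    and xp: "\<forall>i<n. 0 < x $ i" and n: "n > 0"
    and lt: "\<forall>i<n. (X *\<^sub>v x) $ i < x $ i"
  shows "sr X < 1"
proof -
  obtain e where e: "e > 0" "\<forall>i<n. e \<le> (x $ i - (X *\<^sub>v x) $ i) / x $ i"
    using fin_pos[of n "\<lambda>i. (x $ i - (X *\<^sub>v x) $ i) / x $ i"] lt xp by auto
  define e' where "e' = min e (1/2)"
  have e': "e' > 0" "e' \<le> 1/2" using e unfolding e'_def by auto
  have le: "\<forall>i<n. (X *\<^sub>v x) $ i \<le> (1 - e') * x $ i"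
  proof (intro allI impI)
    fix i assume i: "i < n"
    have "e' \<le> (x $ i - (X *\<^sub>v x) $ i) / x $ i" using e(2) i unfolding e'_def by force
    then have "e' * x $ i \<le> x $ i - (X *\<^sub>v x) $ i" using xp i by (simp add: field_simps)
    then show "(X *\<^sub>v x) $ i \<le> (1 - e') * x $ i" by (simp add: algebra_simps)
  qed
  have "sr X \<le> 1 - e'" by (rule sr_upper[OF X nn x xp n _ le], use e' in simp)
  then show ?thesis using e' by simp
qed

lemma theta_idx:
  fixes M :: "real mat"
  assumes M: "M \<in> carrier_mat n n" and c: "dim_vec c = n" and j: "j < n"
  shows "(transpose_mat (1\<^sub>m n - M) *\<^sub>v c) $ j = c $ j - (transpose_mat M *\<^sub>v c) $ j"
proof -
  have cc: "c \<in> carrier_vec n" by (rule carrier_vecI[OF c])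
  have Mt: "transpose_mat M \<in> carrier_mat n n" using M by simp
  have I: "(1\<^sub>m n :: real mat) \<in> carrier_mat n n" by simp
  have "transpose_mat (1\<^sub>m n - M) = 1\<^sub>m n - transpose_mat M"
    using transpose_minus[OF I M] by simp
  then have "transpose_mat (1\<^sub>m n - M) *\<^sub>v c = 1\<^sub>m n *\<^sub>v c - transpose_mat M *\<^sub>v c"
    using minus_mult_distrib_mat_vec[OF I Mt cc] by simp
  also have "1\<^sub>m n *\<^sub>v c = c" by (rule one_mult_mat_vec[OF cc])
  finally have e: "transpose_mat (1\<^sub>m n - M) *\<^sub>v c = c - transpose_mat M *\<^sub>v c" .
  have "(c - transpose_mat M *\<^sub>v c) $ j = c $ j - (transpose_mat M *\<^sub>v c) $ j"
    by (rule index_minus_vec, use Mt j in auto)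
  then show ?thesis unfolding e .
qed

lemma swap_sum:
  fixes a b :: "nat \<Rightarrow> real"
  shows "(\<Sum>i<n. a i * (\<Sum>k<n. b k * c k i)) = (\<Sum>k<n. b k * (\<Sum>i<n. c k i * a i))"
  unfolding sum_distrib_left by (subst sum.swap) (simp add: mult_ac)

theorem mainTheorem3:
  fixes n :: nat and A K B :: "real mat" and \<delta> l :: "nat \<Rightarrow> real"
  assumes n2: "n \<ge> 2"
    and A: "A \<in> carrier_mat n n" and K: "K \<in> carrier_mat n n" and B: "B \<in> carrier_mat n n"
    and nnA: "nonneg_mat A" and nnK: "nonneg_mat K" and nnB: "nonneg_mat B"
    and delta: "\<forall>j<n. 0 < \<delta> j \<and> \<delta> j \<le> 1"
    and lpos: "\<forall>j<n. l j > 0"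
    and Bcol: "\<forall>j<n. \<exists>i<n. B $$ (i,j) \<noteq> 0"
    and irr: "irreducible_mat (A + K * diag_of n \<delta>)"
    and sr_lt: "sr (A + K * diag_of n \<delta>) < 1"
  defines "At \<equiv> A + K * diag_of n \<delta>"
    and "L \<equiv> diag_of n l"
    and "M0 \<equiv> M0_of n (diag_of n l) (A + K * diag_of n \<delta>) B"
  shows "((\<exists>c. dim_vec c = n \<and> (\<forall>j<n. c $ j > 0) \<and> c $ 0 = 1 \<and>
              (\<forall>j<n. (transpose_mat (1\<^sub>m n - M0) *\<^sub>v c) $ j > 0))
           \<longleftrightarrow> sr M0 < 1)
       \<and> (sr M0 < 1 \<longleftrightarrow> sr (At + B * L) < 1)
       \<and> (Theta_val n M0 \<noteq> {} \<longleftrightarrow> sr M0 \<le> 1)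
       \<and> (sr M0 \<le> 1 \<longleftrightarrow> sr (At + B * L) \<le> 1)"
proof -
  have n: "n > 0" using n2 by simp
  have Atc: "At \<in> carrier_mat n n" unfolding At_def using A K by simp
  have Atent: "At $$ (i,j) = A $$ (i,j) + K $$ (i,j) * \<delta> j" if "i < n" "j < n" for i j
  proof -
    have "At $$ (i,j) = A $$ (i,j) + (K * diag_of n \<delta>) $$ (i,j)" unfolding At_def
      by (rule index_add_mat(1), use that K in \<open>auto simp: diag_of_def\<close>)
    then show ?thesis using diag_right[OF K that] by simp
  qed
  have Atnn: "nonneg_mat At" unfolding nonneg_mat_def
  proof (intro allI impI)
    fix i j assume "i < dim_row At" "j < dim_col At"
    then have ij: "i < n" "j < n" using Atc by auto
    have "A $$ (i,j) \<ge> 0" "K $$ (i,j) \<ge> 0" using nnA nnK A K ij unfolding nonneg_mat_def by auto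
    moreover have "\<delta> j \<ge> 0" using delta ij by (auto intro: less_imp_le)
    ultimately show "At $$ (i,j) \<ge> 0" using Atent[OF ij] by simp
  qed
  have irrAt: "irreducible_mat At" using irr unfolding At_def .
  have srAt: "sr At < 1" using sr_lt unfolding At_def .
  obtain N where mi: "mat_inverse (1\<^sub>m n - At) = Some N" and N: "N \<in> carrier_mat n n"
    and AtN: "At * N = N - 1\<^sub>m n" and NAt: "N * At = N - 1\<^sub>m n"
    and Npos: "\<forall>i<n. \<forall>j<n. N $$ (i,j) > 0"
    using neumann[OF Atc Atnn irrAt srAt n] by blast
  have M0eq: "M0 = L * N * B" unfolding M0_def M0_of_def L_def
    using mi unfolding At_def by simp
  have Lc: "L \<in> carrier_mat n n" unfolding L_def by simp
  have M0c: "M0 \<in> carrier_mat n n" unfolding M0eq using Lc N B by simp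
  have M0ent: "M0 $$ (i,j) = l i * (\<Sum>k<n. N $$ (i,k) * B $$ (k,j))" if ij: "i < n" "j < n" for i j
  proof -
    have LN: "L * N \<in> carrier_mat n n" using Lc N by simp
    have "M0 $$ (i,j) = (\<Sum>k<n. (L * N) $$ (i,k) * B $$ (k,j))"
      unfolding M0eq by (rule idx_mult[OF LN B ij])
    also have "\<dots> = (\<Sum>k<n. l i * (N $$ (i,k) * B $$ (k,j)))"
      by (rule sum.cong, simp, unfold L_def, subst diag_left[OF N], use ij in auto)
    finally show ?thesis by (simp add: sum_distrib_left)
  qed
  have Nnn: "\<forall>i<n. \<forall>j<n. 0 \<le> N $$ (i,j)" using Npos by (auto intro: less_imp_le)
  have M0pos: "M0 $$ (i,j) > 0" if ij: "i < n" "j < n" for i j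
  proof -
    obtain k where k: "k < n" "B $$ (k,j) \<noteq> 0" using Bcol ij by auto
    have Bnn: "\<And>a b. a < n \<Longrightarrow> b < n \<Longrightarrow> B $$ (a,b) \<ge> 0" using nnB B unfolding nonneg_mat_def by auto
    have "0 < N $$ (i,k) * B $$ (k,j)" using Npos ij k Bnn[of k j] by (simp add: less_le)
    also have "\<dots> \<le> (\<Sum>k<n. N $$ (i,k) * B $$ (k,j))"
      by (rule member_le_sum[where f = "\<lambda>k. N $$ (i,k) * B $$ (k,j)"],
          use k ij Nnn Bnn in \<open>auto intro!: mult_nonneg_nonneg\<close>)
    finally show ?thesis using M0ent[OF ij] lpos ij by simp
  qed
  define Y where "Y = transpose_mat M0"
  have Yc: "Y \<in> carrier_mat n n" unfolding Y_def using M0c by simp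
  have Yent: "Y $$ (i,j) = M0 $$ (j,i)" if "i < n" "j < n" for i j
    unfolding Y_def using that M0c by simp
  have Ypos: "\<forall>i<n. \<forall>j<n. Y $$ (i,j) > 0" using Yent M0pos by simp
  have Ynn: "nonneg_mat Y" using Ypos Yc unfolding nonneg_mat_def by (auto intro: less_imp_le)
  have srY: "sr Y = sr M0" unfolding Y_def by (rule sr_transpose[OF M0c])
  define \<rho> where "\<rho> = sr M0"
  obtain u where du: "dim_vec u = n" and upos: "\<forall>i<n. u $ i > 0"
    and Yu: "\<forall>i<n. (Y *\<^sub>v u) $ i = \<rho> * u $ i"
    using perron[OF Yc n Ypos] unfolding srY \<rho>_def by blast
  have theta: "(transpose_mat (1\<^sub>m n - M0) *\<^sub>v c) $ j = c $ j - (Y *\<^sub>v c) $ j"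
    if "dim_vec c = n" "j < n" for c j
    unfolding Y_def by (rule theta_idx[OF M0c that])
  define c where "c = (1 / u $ 0) \<cdot>\<^sub>v u"
  have u0: "u $ 0 > 0" using upos n by simp
  have dc: "dim_vec c = n" unfolding c_def using du by simp
  have cpos: "\<forall>j<n. c $ j > 0" unfolding c_def using du upos u0 by simp
  have c0: "c $ 0 = 1" unfolding c_def using du u0 n by simp
  have Yc_eq: "(Y *\<^sub>v c) $ j = \<rho> * c $ j" if j: "j < n" for j
  proof -
    have uc: "u \<in> carrier_vec n" by (rule carrier_vecI[OF du])
    have "Y *\<^sub>v c = (1 / u $ 0) \<cdot>\<^sub>v (Y *\<^sub>v u)" unfolding c_def by (rule mult_mat_vec[OF Yc uc])
    then show ?thesis using Yu j Yc du unfolding c_def by simp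
  qed
  have thc: "(transpose_mat (1\<^sub>m n - M0) *\<^sub>v c) $ j = (1 - \<rho>) * c $ j" if "j < n" for j
    using theta[OF dc that] Yc_eq[OF that] by (simp add: algebra_simps)
  have P1: "(\<exists>c. dim_vec c = n \<and> (\<forall>j<n. c $ j > 0) \<and> c $ 0 = 1 \<and>
              (\<forall>j<n. (transpose_mat (1\<^sub>m n - M0) *\<^sub>v c) $ j > 0)) \<longleftrightarrow> sr M0 < 1"
  proof
    assume "\<exists>c. dim_vec c = n \<and> (\<forall>j<n. c $ j > 0) \<and> c $ 0 = 1 \<and>
              (\<forall>j<n. (transpose_mat (1\<^sub>m n - M0) *\<^sub>v c) $ j > 0)"
    then obtain d where d: "dim_vec d = n" "\<forall>j<n. d $ j > 0"
      "\<forall>j<n. (transpose_mat (1\<^sub>m n - M0) *\<^sub>v d) $ j > 0" by blast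
    have "\<forall>j<n. (Y *\<^sub>v d) $ j < d $ j" using d theta[OF d(1)] by force
    from sr_upper_strict[OF Yc Ynn d(1) d(2) n this] show "sr M0 < 1" using srY by simp
  next
    assume "sr M0 < 1"
    then have "\<forall>j<n. (transpose_mat (1\<^sub>m n - M0) *\<^sub>v c) $ j > 0"
      using thc cpos unfolding \<rho>_def by simp
    then show "\<exists>c. dim_vec c = n \<and> (\<forall>j<n. c $ j > 0) \<and> c $ 0 = 1 \<and>
              (\<forall>j<n. (transpose_mat (1\<^sub>m n - M0) *\<^sub>v c) $ j > 0)"
      using dc cpos c0 by blast
  qed
  have P3: "Theta_val n M0 \<noteq> {} \<longleftrightarrow> sr M0 \<le> 1"
  proof
    assume "Theta_val n M0 \<noteq> {}"
    then obtain d where d: "dim_vec d = n" "\<forall>j<n. d $ j > 0"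
      "\<forall>j<n. (transpose_mat (1\<^sub>m n - M0) *\<^sub>v d) $ j \<ge> 0" unfolding Theta_val_def by blast
    have "\<forall>j<n. (Y *\<^sub>v d) $ j \<le> 1 * d $ j" using d theta[OF d(1)] by force
    from sr_upper[OF Yc Ynn d(1) d(2) n _ this] show "sr M0 \<le> 1" using srY by simp
  next
    assume "sr M0 \<le> 1"
    then have "\<forall>j<n. (transpose_mat (1\<^sub>m n - M0) *\<^sub>v c) $ j \<ge> 0"
      using thc cpos unfolding \<rho>_def by (simp add: less_imp_le)
    then show "Theta_val n M0 \<noteq> {}" using dc cpos c0 unfolding Theta_val_def by blast
  qed
  define T where "T = At + B * L"
  have BL: "B * L \<in> carrier_mat n n" using B Lc by simp
  have Tc: "T \<in> carrier_mat n n" unfolding T_def using Atc BL by simp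
  have Tent: "T $$ (i,j) = At $$ (i,j) + B $$ (i,j) * l j" if ij: "i < n" "j < n" for i j
  proof -
    have "T $$ (i,j) = At $$ (i,j) + (B * diag_of n l) $$ (i,j)" unfolding T_def L_def
      by (rule index_add_mat(1), use ij B in \<open>auto simp: diag_of_def\<close>)
    then show ?thesis using diag_right[OF B ij] by simp
  qed
  have Tnn: "nonneg_mat T" unfolding nonneg_mat_def
  proof (intro allI impI)
    fix i j assume "i < dim_row T" "j < dim_col T"
    then have ij: "i < n" "j < n" using Tc by auto
    have "At $$ (i,j) \<ge> 0" "B $$ (i,j) \<ge> 0" using Atnn nnB Atc B ij unfolding nonneg_mat_def by auto
    moreover have "l j \<ge> 0" using lpos ij by (auto intro: less_imp_le)
    ultimately show "T $$ (i,j) \<ge> 0" using Tent[OF ij] by simp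
  qed
  define TT where "TT = transpose_mat T"
  have TTc: "TT \<in> carrier_mat n n" unfolding TT_def using Tc by simp
  have TTnn: "nonneg_mat TT" using Tnn Tc unfolding TT_def nonneg_mat_def by auto
  have srTT: "sr TT = sr T" unfolding TT_def by (rule sr_transpose[OF Tc])
  define x where "x = vec n (\<lambda>j. \<Sum>k<n. (u $ k * l k) * N $$ (k,j))"
  have dx: "dim_vec x = n" unfolding x_def by simp
  have xpos: "\<forall>j<n. x $ j > 0"
  proof (intro allI impI)
    fix j assume j: "j < n"
    have "0 < (u $ j * l j) * N $$ (j,j)" using upos lpos Npos j by simp
    also have "\<dots> \<le> (\<Sum>k<n. (u $ k * l k) * N $$ (k,j))"
      by (rule member_le_sum[where f = "\<lambda>k. (u $ k * l k) * N $$ (k,j)"],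
          use j upos lpos Npos in \<open>auto intro!: mult_nonneg_nonneg less_imp_le\<close>)
    finally show "x $ j > 0" unfolding x_def using j by simp
  qed
  have key: "(TT *\<^sub>v x) $ j = x $ j + (\<rho> - 1) * (l j * u $ j)" if j: "j < n" for j
  proof -
    define b where "b = (\<lambda>k. u $ k * l k)"
    have partA: "(\<Sum>i<n. At $$ (i,j) * x $ i) = x $ j - l j * u $ j"
    proof -
      have "(\<Sum>i<n. At $$ (i,j) * x $ i) = (\<Sum>i<n. At $$ (i,j) * (\<Sum>k<n. b k * N $$ (k,i)))"
        unfolding x_def b_def by simp
      also have "\<dots> = (\<Sum>k<n. b k * (\<Sum>i<n. N $$ (k,i) * At $$ (i,j)))"
        by (rule swap_sum)
      also have "\<dots> = (\<Sum>k<n. b k * (N $$ (k,j) - (if k = j then 1 else 0)))"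
      proof (rule sum.cong)
        fix k assume k: "k \<in> {..<n}"
        have "(\<Sum>i<n. N $$ (k,i) * At $$ (i,j)) = (N * At) $$ (k,j)"
          by (rule idx_mult[symmetric, OF N Atc], use k j in auto)
        also have "\<dots> = N $$ (k,j) - (if k = j then 1 else 0)" unfolding NAt using k j N by simp
        finally show "b k * (\<Sum>i<n. N $$ (k,i) * At $$ (i,j)) =
          b k * (N $$ (k,j) - (if k = j then 1 else 0))" by simp
      qed simp
      finally have S0: "(\<Sum>i<n. At $$ (i,j) * x $ i) = (\<Sum>k<n. b k * (N $$ (k,j) - (if k = j then 1 else 0)))" .
      have S1: "(\<Sum>k<n. b k * (N $$ (k,j) - (if k = j then 1 else 0))) =
          (\<Sum>k<n. b k * N $$ (k,j)) - (\<Sum>k<n. b k * (if k = j then 1 else 0))"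
        by (simp add: right_diff_distrib sum_subtractf)
      have S2a: "(\<Sum>k<n. b k * (if k = j then 1 else 0)) = (\<Sum>k<n. if k = j then b k else 0)"
        by (rule sum.cong) auto
      have S2b: "(\<Sum>k<n. if k = j then b k else 0) = b j" using j by (simp add: sum.delta)
      have S3: "(\<Sum>k<n. b k * N $$ (k,j)) = x $ j" unfolding x_def b_def using j by simp
      from S0 S1 have "(\<Sum>i<n. At $$ (i,j) * x $ i) =
          (\<Sum>k<n. b k * N $$ (k,j)) - (\<Sum>k<n. b k * (if k = j then 1 else 0))" by (rule trans)
      then have "(\<Sum>i<n. At $$ (i,j) * x $ i) = x $ j - b j" unfolding S2a S2b S3 .
      then show ?thesis unfolding b_def by (simp add: mult.commute)
    qed
    have partB: "(\<Sum>i<n. B $$ (i,j) * x $ i) = \<rho> * u $ j"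
    proof -
      have "(\<Sum>i<n. B $$ (i,j) * x $ i) = (\<Sum>i<n. B $$ (i,j) * (\<Sum>k<n. b k * N $$ (k,i)))"
        unfolding x_def b_def by simp
      also have "\<dots> = (\<Sum>k<n. b k * (\<Sum>i<n. N $$ (k,i) * B $$ (i,j)))"
        by (rule swap_sum)
      also have "\<dots> = (\<Sum>k<n. Y $$ (j,k) * u $ k)"
      proof (rule sum.cong)
        fix k assume k: "k \<in> {..<n}"
        show "b k * (\<Sum>i<n. N $$ (k,i) * B $$ (i,j)) = Y $$ (j,k) * u $ k"
          using Yent[of j k] M0ent[of k j] k j unfolding b_def by simp
      qed simp
      also have "\<dots> = (Y *\<^sub>v u) $ j" by (rule idx_mult_vec[symmetric, OF Yc du j])
      also have "\<dots> = \<rho> * u $ j" using Yu j by simp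
      finally show ?thesis .
    qed
    have "(TT *\<^sub>v x) $ j = (\<Sum>i<n. TT $$ (j,i) * x $ i)" by (rule idx_mult_vec[OF TTc dx j])
    also have "\<dots> = (\<Sum>i<n. (At $$ (i,j) + B $$ (i,j) * l j) * x $ i)"
      by (rule sum.cong, simp, unfold TT_def, use j Tc Tent in auto)
    also have "\<dots> = (\<Sum>i<n. At $$ (i,j) * x $ i) + l j * (\<Sum>i<n. B $$ (i,j) * x $ i)"
      by (simp add: algebra_simps sum.distrib sum_distrib_left)
    finally have "(TT *\<^sub>v x) $ j = (\<Sum>i<n. At $$ (i,j) * x $ i) + l j * (\<Sum>i<n. B $$ (i,j) * x $ i)" .
    then show ?thesis unfolding partA partB by (simp add: algebra_simps)
  qed
  have lu: "\<forall>j<n. l j * u $ j > 0" using lpos upos by simp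
  have P2: "sr M0 < 1 \<longleftrightarrow> sr (At + B * L) < 1"
  proof
    assume "sr M0 < 1"
    then have "\<forall>j<n. (TT *\<^sub>v x) $ j < x $ j" using key lu unfolding \<rho>_def
      by (simp add: mult_neg_pos)
    from sr_upper_strict[OF TTc TTnn dx xpos n this] show "sr (At + B * L) < 1"
      using srTT unfolding T_def by simp
  next
    assume lt: "sr (At + B * L) < 1"
    show "sr M0 < 1"
    proof (rule ccontr)
      assume "\<not> sr M0 < 1"
      then have "\<rho> \<ge> 1" unfolding \<rho>_def by simp
      then have "\<forall>j<n. 1 * x $ j \<le> (TT *\<^sub>v x) $ j" using key lu
        by (simp add: less_imp_le)
      from sr_lower[OF TTc TTnn dx _ _ _ _ this, of 0] xpos n have "1 \<le> sr TT"
        by (auto intro: less_imp_le)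
      then show False using lt srTT unfolding T_def by simp
    qed
  qed
  have P4: "sr M0 \<le> 1 \<longleftrightarrow> sr (At + B * L) \<le> 1"
  proof
    assume "sr M0 \<le> 1"
    then have "\<forall>j<n. (TT *\<^sub>v x) $ j \<le> 1 * x $ j" using key lu unfolding \<rho>_def
      by (simp add: mult_nonpos_nonneg less_imp_le)
    from sr_upper[OF TTc TTnn dx xpos n _ this] show "sr (At + B * L) \<le> 1"
      using srTT unfolding T_def by simp
  next
    assume le: "sr (At + B * L) \<le> 1"
    show "sr M0 \<le> 1"
    proof (rule ccontr)
      assume "\<not> sr M0 \<le> 1"
      then have r1: "\<rho> > 1" unfolding \<rho>_def by simp
      obtain e where e: "e > 0" "\<forall>j<n. e \<le> (\<rho> - 1) * (l j * u $ j) / x $ j"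
        using fin_pos[of n "\<lambda>j. (\<rho> - 1) * (l j * u $ j) / x $ j"] r1 lu xpos by auto
      have "\<forall>j<n. (1 + e) * x $ j \<le> (TT *\<^sub>v x) $ j"
      proof (intro allI impI)
        fix j assume j: "j < n"
        have "e * x $ j \<le> (\<rho> - 1) * (l j * u $ j)" using e(2) j xpos by (simp add: field_simps)
        then show "(1 + e) * x $ j \<le> (TT *\<^sub>v x) $ j" using key[OF j] by (simp add: algebra_simps)
      qed
      from sr_lower[OF TTc TTnn dx _ _ _ _ this, of 0] xpos n e have "1 + e \<le> sr TT"
        by (auto intro: less_imp_le)
      then show False using le e srTT unfolding T_def by simp
    qed
  qed
  show ?thesis using P1 P2 P3 P4 by blast
qed

end
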